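(* Let $d=\infty$ and $C>0$. (1) For product weights ${\boldsymbol\gamma}$: ${\boldsymbol\gamma}\in\mathcal S_{d,C}$ iff $\sum_{j\in\mathbb N}\gamma_j<\infty$. (2) For POD weights ${\boldsymbol\gamma}$ with parameters $a,p$: if $p>a$ and $\Gamma_1>0$, then ${\boldsymbol\gamma}\in\mathcal S_{d,C}$ iff $\sum_{j\in\mathbb N}\gamma_j<\infty$; and if $p=a\ge1$, then $\sum_{j\in\mathbb N}(C^2\gamma_j)^{1/p}<1$ implies ${\boldsymbol\gamma}\in\mathcal S_{d,C}$. (3) For finite-order weights ${\boldsymbol\gamma}$ (of some order $\omega\in\mathbb N$): ${\boldsymbol\gamma}\in\mathcal S_{d,C}$ iff $\sum_{u\in\mathcal U_d}\gamma_u<\infty$.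
   Context: $\mathcal U_\infty$ denotes the set of finite subsets of $\mathbb N$; weights are families ${\boldsymbol\gamma}=(\gamma_u)_{u\in\mathcal U_\infty}$ of non-negative reals. For $C>0$, $\mathcal S_{\infty,C}=\{{\boldsymbol\gamma}:\sum_{v\in\mathcal U_\infty}C^{2|v|}\gamma_v<\infty\}$. Product weights: $\gamma_u=\prod_{j\in u}\gamma_j$ (with $\gamma_\emptyset=1$) for a non-increasing sequence $(\gamma_j)_{j\in\mathbb N}$ of non-negative reals. POD weights: $\gamma_u=\Gamma_{|u|}\prod_{j\in u}\gamma_j$ with $(\gamma_j)$ as before and non-negative $(\Gamma_k)_{k\ge0}$ satisfying $\Gamma_k\le C_a(k!)^a$ for all $k$ and some constants $a,C_a>0$; $p=\mathrm{decay}((\gamma_j)_{j\in\mathbb N})$, where $\mathrm{decay}((a_v)_{v\in V})=\sup\{\tau>0:\sum_v a_v^{1/\tau}<\infty\}$ ($\sup\emptyset=0$). Finite-order weights of order $\omega\in\mathbb N$: $\gamma_u=0$ whenever $|u|>\omega$. *)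

theory Defs
  imports "HOL-Analysis.Analysis"
begin

text \<open>Weights are families indexed by finite subsets of nat (the set U_infinity);
  only their values on finite sets matter.\<close>

definition U_inf :: "nat set set" where
  "U_inf = {u. finite u}"

text \<open>S_{infinity,C}: sum over v in U_infinity of C^(2|v|) gamma_v is finite
  (terms are non-negative, so summability = finiteness of the sum).\<close>
definition in_S_inf :: "real \<Rightarrow> (nat set \<Rightarrow> real) \<Rightarrow> bool" where
  "in_S_inf C \<gamma> \<longleftrightarrow> (\<lambda>v. C ^ (2 * card v) * \<gamma> v) summable_on U_inf"

definition decay :: "(nat \<Rightarrow> real) \<Rightarrow> ereal" where
  "decay a = (let S = {\<tau>::real. \<tau> > 0 \<and> summable (\<lambda>j. a j powr (1 / \<tau>))}
              in if S = {} then 0 else Sup (ereal ` S))"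

definition is_product_weights :: "(nat set \<Rightarrow> real) \<Rightarrow> (nat \<Rightarrow> real) \<Rightarrow> bool" where
  "is_product_weights \<gamma> g \<longleftrightarrow>
     (\<forall>j. 0 \<le> g j) \<and> decseq g \<and> (\<forall>u\<in>U_inf. \<gamma> u = (\<Prod>j\<in>u. g j))"

definition is_POD_weights ::
  "(nat set \<Rightarrow> real) \<Rightarrow> (nat \<Rightarrow> real) \<Rightarrow> (nat \<Rightarrow> real) \<Rightarrow> real \<Rightarrow> real \<Rightarrow> bool" where
  "is_POD_weights \<gamma> \<Gamma> g a Ca \<longleftrightarrow>
     (\<forall>j. 0 \<le> g j) \<and> decseq g \<and> a > 0 \<and> Ca > 0 \<and>
     (\<forall>k. 0 \<le> \<Gamma> k \<and> \<Gamma> k \<le> Ca * (fact k) powr a) \<and>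
     (\<forall>u\<in>U_inf. \<gamma> u = \<Gamma> (card u) * (\<Prod>j\<in>u. g j))"

definition is_finite_order_weights :: "(nat set \<Rightarrow> real) \<Rightarrow> nat \<Rightarrow> bool" where
  "is_finite_order_weights \<gamma> \<omega> \<longleftrightarrow>
     (\<forall>u\<in>U_inf. 0 \<le> \<gamma> u) \<and> (\<forall>u\<in>U_inf. card u > \<omega> \<longrightarrow> \<gamma> u = 0)"

end

theory Submission
  imports Defs
begin

lemma bern2:
  fixes p y :: real assumes "p \<ge> 0" "y \<ge> 0"
  shows "p ^ Suc m + real (Suc m) * y * p ^ m \<le> (p + y) ^ Suc m"
proof (induction m)
  case 0 then show ?case by simp
next
  case (Suc m)
  have "(p+y)^Suc (Suc m) = (p+y) * (p+y)^Suc m" by simp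
  also have "\<dots> \<ge> (p+y) * (p ^ Suc m + real (Suc m) * y * p ^ m)"
    using Suc assms by (intro mult_left_mono) auto
  finally have "(p+y)^Suc (Suc m) \<ge> (p+y) * (p ^ Suc m + real (Suc m) * y * p ^ m)" .
  moreover have "(p+y) * (p ^ Suc m + real (Suc m) * y * p ^ m) \<ge> p ^ Suc (Suc m) + real (Suc (Suc m)) * y * p ^ Suc m"
    using assms by (simp add: algebra_simps)
  ultimately show ?case by linarith
qed

definition esym :: "(nat \<Rightarrow> real) \<Rightarrow> nat set \<Rightarrow> nat \<Rightarrow> real" where
  "esym x A k = (\<Sum>u\<in>{u. u \<subseteq> A \<and> card u = k}. \<Prod>j\<in>u. x j)"

lemma esym_split:
  assumes "finite A" "a \<notin> A"
  shows "{u. u \<subseteq> insert a A \<and> card u = Suc m} =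
     {u. u \<subseteq> A \<and> card u = Suc m} \<union> insert a ` {u. u \<subseteq> A \<and> card u = m}"
proof (rule equalityI)
  show "{u. u \<subseteq> insert a A \<and> card u = Suc m} \<subseteq>
     {u. u \<subseteq> A \<and> card u = Suc m} \<union> insert a ` {u. u \<subseteq> A \<and> card u = m}"
  proof
    fix u assume "u \<in> {u. u \<subseteq> insert a A \<and> card u = Suc m}"
    then have u: "u \<subseteq> insert a A" "card u = Suc m" by auto
    have fu: "finite u" using u assms finite_subset by blast
    show "u \<in> {u. u \<subseteq> A \<and> card u = Suc m} \<union> insert a ` {u. u \<subseteq> A \<and> card u = m}"
    proof (cases "a \<in> u")
      case True
      have "u = insert a (u - {a})" using True by auto
      moreover have "u - {a} \<subseteq> A" "card (u - {a}) = m" using u True fu by auto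
      ultimately show ?thesis by blast
    next
      case False then show ?thesis using u by auto
    qed
  qed
next
  show "{u. u \<subseteq> A \<and> card u = Suc m} \<union> insert a ` {u. u \<subseteq> A \<and> card u = m}
     \<subseteq> {u. u \<subseteq> insert a A \<and> card u = Suc m}"
  proof
    fix u assume "u \<in> {u. u \<subseteq> A \<and> card u = Suc m} \<union> insert a ` {u. u \<subseteq> A \<and> card u = m}"
    then consider "u \<subseteq> A" "card u = Suc m" | v where "u = insert a v" "v \<subseteq> A" "card v = m" by blast
    then show "u \<in> {u. u \<subseteq> insert a A \<and> card u = Suc m}"
    proof cases
      case 2
      then have "finite v" "a \<notin> v" using assms finite_subset by blast+
      then show ?thesis using 2 by auto
    qed auto
  qed
qed

lemma esym_bound:
  assumes "finite A" "\<And>j. x j \<ge> 0"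
  shows "esym x A k \<le> (\<Sum>j\<in>A. x j) ^ k / fact k"
  using assms(1)
proof (induction A arbitrary: k rule: finite_induct)
  case empty
  show ?case
  proof (cases k)
    case 0
    have h: "{u. u \<subseteq> {} \<and> card u = k} = {{}}" using 0 by auto
    show ?thesis unfolding esym_def h using 0 by simp
  next
    case (Suc m)
    have h: "{u. u \<subseteq> {} \<and> card u = k} = {}" using Suc by auto
    show ?thesis unfolding esym_def h using Suc by simp
  qed
next
  case (insert a A)
  show ?case
  proof (cases k)
    case 0
    have "{u. u \<subseteq> insert a A \<and> card u = 0} = {{}}"
      using insert(1) by (auto dest: finite_subset)
    then show ?thesis using 0 by (simp add: esym_def)
  next
    case (Suc m)
    let ?p = "\<Sum>j\<in>A. x j"
    have fin: "finite {u. u \<subseteq> A \<and> card u = n}" for n using insert(1) by auto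
    have disj: "{u. u \<subseteq> A \<and> card u = Suc m} \<inter> insert a ` {u. u \<subseteq> A \<and> card u = m} = {}"
      using insert(2) by auto
    have inj: "inj_on (insert a) {u. u \<subseteq> A \<and> card u = m}"
      using insert(2) unfolding inj_on_def by (metis insert_ident mem_Collect_eq subset_iff)
    have "esym x (insert a A) k = esym x A (Suc m) + (\<Sum>u\<in>{u. u \<subseteq> A \<and> card u = m}. \<Prod>j\<in>insert a u. x j)"
      unfolding esym_def Suc esym_split[OF insert(1,2)]
      by (subst sum.union_disjoint) (use fin disj in \<open>auto simp: sum.reindex[OF inj]\<close>)
    also have "(\<Sum>u\<in>{u. u \<subseteq> A \<and> card u = m}. \<Prod>j\<in>insert a u. x j) = x a * esym x A m"
      unfolding esym_def sum_distrib_left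
    proof (rule sum.cong)
      fix u assume "u \<in> {u. u \<subseteq> A \<and> card u = m}"
      then have "finite u" "a \<notin> u" using insert(1,2) finite_subset by auto
      then show "(\<Prod>j\<in>insert a u. x j) = x a * (\<Prod>j\<in>u. x j)" by simp
    qed simp
    also have "esym x A (Suc m) + x a * esym x A m \<le> ?p ^ Suc m / fact (Suc m) + x a * (?p ^ m / fact m)"
      using insert(3)[of "Suc m"] insert(3)[of m] assms(2)
      by (intro add_mono mult_left_mono) auto
    also have "\<dots> = (?p ^ Suc m + real (Suc m) * x a * ?p ^ m) / fact (Suc m)"
    proof -
      have aux: "X/(q*F) + y*(P/F) = (X + q*y*P)/(q*F)" if "F > 0" "q > 0" for X y P q F :: real
        using that by (simp add: field_simps)
      have "fact (Suc m) = real (Suc m) * (fact m::real)" by simp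
      then show ?thesis by (simp only: aux fact_gt_zero of_nat_0_less_iff zero_less_Suc)
    qed
    also have "\<dots> \<le> (?p + x a) ^ Suc m / fact (Suc m)"
      by (intro divide_right_mono bern2) (auto intro: sum_nonneg assms(2))
    finally show ?thesis using insert Suc by (simp add: add.commute)
  qed
qed

lemma sum_powr_le:
  fixes z :: "'i \<Rightarrow> real" and b :: real
  assumes "finite F" "\<And>i. z i \<ge> 0" "b \<ge> 1"
  shows "(\<Sum>i\<in>F. z i powr b) \<le> (\<Sum>i\<in>F. z i) powr b"
proof -
  let ?Z = "\<Sum>i\<in>F. z i"
  have Z0: "?Z \<ge> 0" using assms(2) by (simp add: sum_nonneg)
  have "z i powr b \<le> z i * ?Z powr (b - 1)" if "i \<in> F" for i
  proof -
    have zi: "z i \<le> ?Z" using assms that by (intro member_le_sum) auto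
    have "z i powr b = z i powr (1 + (b - 1))" by simp
    also have "\<dots> = z i powr 1 * z i powr (b - 1)" by (rule powr_add)
    also have "\<dots> = z i * z i powr (b - 1)" using assms by (simp add: powr_one)
    also have "\<dots> \<le> z i * ?Z powr (b - 1)"
      using assms zi by (intro mult_left_mono powr_mono2) auto
    finally show ?thesis .
  qed
  then have "(\<Sum>i\<in>F. z i powr b) \<le> (\<Sum>i\<in>F. z i * ?Z powr (b - 1))" by (rule sum_mono)
  also have "\<dots> = ?Z * ?Z powr (b - 1)" by (simp add: sum_distrib_right)
  also have "\<dots> = ?Z powr b"
  proof -
    have "?Z * ?Z powr (b - 1) = ?Z powr 1 * ?Z powr (b - 1)" using Z0 by (simp add: powr_one)
    also have "\<dots> = ?Z powr (1 + (b - 1))" by (rule powr_add[symmetric])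
    also have "\<dots> = ?Z powr b" by simp
    finally show ?thesis .
  qed
  finally show ?thesis .
qed

lemma esym_powr_le:
  fixes c :: "nat \<Rightarrow> real" and b :: real
  assumes "finite A" "\<And>j. c j \<ge> 0" "b \<ge> 1"
  shows "esym c A k \<le> (esym (\<lambda>j. c j powr (1/b)) A k) powr b"
proof -
  have cj: "c j = (c j powr (1/b)) powr b" for j
    using assms by (simp add: powr_powr powr_one)
  have "esym c A k = (\<Sum>u\<in>{u. u \<subseteq> A \<and> card u = k}. (\<Prod>j\<in>u. c j powr (1/b)) powr b)"
    unfolding esym_def prod_powr_distrib cj[symmetric] by simp
  also have "\<dots> \<le> (esym (\<lambda>j. c j powr (1/b)) A k) powr b"
    unfolding esym_def using assms by (intro sum_powr_le) (auto intro: prod_nonneg)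
  finally show ?thesis .
qed

lemma main_summable:
  fixes c w :: "nat \<Rightarrow> real" and b :: real
  assumes c0: "\<And>j. c j \<ge> 0" and w0: "\<And>k. w k \<ge> 0" and b1: "b \<ge> 1"
    and sx: "summable (\<lambda>j. c j powr (1/b))"
    and sw: "summable (\<lambda>k. w k * ((suminf (\<lambda>j. c j powr (1/b)))^k / fact k) powr b)"
  shows "(\<lambda>u. w (card u) * (\<Prod>j\<in>u. c j)) summable_on U_inf"
proof (rule nonneg_bdd_above_summable_on)
  let ?x = "\<lambda>j. c j powr (1/b)"
  let ?S = "suminf ?x"
  let ?h = "\<lambda>u. w (card u) * (\<Prod>j\<in>u. c j)"
  let ?t = "\<lambda>k. w k * (?S^k / fact k) powr b"
  show "\<And>u. u \<in> U_inf \<Longrightarrow> ?h u \<ge> 0" using c0 w0 by (auto intro!: mult_nonneg_nonneg prod_nonneg)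
  show "bdd_above (sum ?h ` {F. F \<subseteq> U_inf \<and> finite F})"
  proof (rule bdd_aboveI2)
    fix F assume "F \<in> {F. F \<subseteq> U_inf \<and> finite F}"
    then have F: "F \<subseteq> U_inf" "finite F" by auto
    have "finite (\<Union>F)" using F by (auto simp: U_inf_def)
    then obtain N where N: "\<Union>F \<subseteq> {..<N}" using finite_nat_bounded by blast
    have FP: "F \<subseteq> Pow {..<N}" using N by auto
    have "sum ?h F \<le> sum ?h (Pow {..<N})"
      using c0 w0 FP by (intro sum_mono2) (auto intro!: mult_nonneg_nonneg prod_nonneg)
    also have "\<dots> = (\<Sum>k\<in>{..N}. sum ?h {u. u \<in> Pow {..<N} \<and> card u = k})"
      by (rule sum.group[symmetric]) (auto intro: card_mono[of "{..<N}", simplified])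
    also have "\<dots> = (\<Sum>k\<in>{..N}. w k * esym c {..<N} k)"
      unfolding esym_def sum_distrib_left by (intro sum.cong) auto
    also have "\<dots> \<le> (\<Sum>k\<in>{..N}. ?t k)"
    proof (intro sum_mono mult_left_mono w0)
      fix k
      have "esym c {..<N} k \<le> (esym ?x {..<N} k) powr b"
        using c0 b1 by (intro esym_powr_le) auto
      also have "\<dots> \<le> ((\<Sum>j\<in>{..<N}. ?x j) ^ k / fact k) powr b"
        using b1 by (intro powr_mono2 esym_bound) (auto simp: esym_def intro!: sum_nonneg prod_nonneg)
      also have "\<dots> \<le> (?S ^ k / fact k) powr b"
        using b1 sx
        by (intro powr_mono2 divide_right_mono power_mono sum_le_suminf)
           (auto intro!: sum_nonneg divide_nonneg_pos zero_le_power)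
      finally show "esym c {..<N} k \<le> (?S ^ k / fact k) powr b" .
    qed
    also have "\<dots> \<le> suminf ?t"
      using sw w0 by (intro sum_le_suminf) auto
    finally show "sum ?h F \<le> suminf ?t" .
  qed
qed

lemma power_powr_real:
  fixes x b :: real
  shows "(x ^ n) powr b = (x powr b) ^ n"
proof -
  have "(x ^ n) powr b = (\<Prod>i<n. x) powr b" by simp
  also have "\<dots> = (\<Prod>i<n. x powr b)" by (rule prod_powr_distrib)
  also have "\<dots> = (x powr b) ^ n" by simp
  finally show ?thesis .
qed

lemma sing_summable:
  fixes h :: "nat set \<Rightarrow> real"
  assumes "h summable_on U_inf"
  shows "summable (\<lambda>j. h {j})"
proof -
  have "range (\<lambda>j::nat. {j}) \<subseteq> U_inf" by (auto simp: U_inf_def)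
  then have "h summable_on range (\<lambda>j::nat. {j})" using assms summable_on_subset by blast
  moreover have "inj (\<lambda>j::nat. {j})" by (auto simp: inj_on_def)
  ultimately have "(h \<circ> (\<lambda>j::nat. {j})) summable_on UNIV" using summable_on_reindex by blast
  then show ?thesis using summable_on_imp_summable by (simp add: o_def)
qed

lemma geom_fact:
  fixes X e :: real
  assumes "X \<ge> 0" "e > 0"
  shows "summable (\<lambda>k. X ^ k * fact k powr (- e))"
proof -
  have "((\<lambda>n. real (Suc n) powr (- e)) \<longlongrightarrow> 0) sequentially"
  proof (rule tendsto_neg_powr)
    show "filterlim (\<lambda>n. real (Suc n)) at_top sequentially"
      by (rule filterlim_compose[OF filterlim_real_sequentially filterlim_Suc])
  qed (use assms in simp)
  then have "((\<lambda>n. X * real (Suc n) powr (- e)) \<longlongrightarrow> X * 0) sequentially"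
    by (intro tendsto_mult) auto
  then have "eventually (\<lambda>n. X * real (Suc n) powr (- e) < 1/2) sequentially"
    by (intro order_tendstoD) auto
  then obtain N where N: "\<And>n. n \<ge> N \<Longrightarrow> X * real (Suc n) powr (- e) < 1/2"
    by (auto simp: eventually_sequentially)
  show ?thesis
  proof (rule summable_ratio_test[of "1/2" N])
    fix n assume "n \<ge> N"
    have "X ^ Suc n * fact (Suc n) powr (- e) = (X * real (Suc n) powr (- e)) * (X ^ n * fact n powr (- e))"
      by (simp add: powr_mult fact_Suc)
    also have "\<dots> \<le> 1/2 * (X ^ n * fact n powr (- e))"
      using N[OF \<open>n \<ge> N\<close>] assms by (intro mult_right_mono) auto
    finally show "norm (X ^ Suc n * fact (Suc n) powr (- e)) \<le> 1/2 * norm (X ^ n * fact n powr (- e))"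
      using assms by simp
  qed simp
qed

lemma term_bound:
  fixes S a b Ca :: real and G :: "nat \<Rightarrow> real"
  assumes "S \<ge> 0" "G k \<le> Ca * fact k powr a" "0 \<le> G k"
  shows "G k * (S ^ k / fact k) powr b \<le> Ca * ((S powr b) ^ k * fact k powr (a - b))"
proof -
  have "(S ^ k / fact k) powr b = (S powr b) ^ k / fact k powr b"
    by (simp add: powr_divide power_powr_real)
  moreover have "G k * ((S powr b) ^ k / fact k powr b) \<le> Ca * fact k powr a * ((S powr b) ^ k / fact k powr b)"
    using assms by (intro mult_right_mono) auto
  moreover have "Ca * fact k powr a * ((S powr b) ^ k / fact k powr b) = Ca * ((S powr b) ^ k * fact k powr (a - b))"
    by (simp add: powr_diff)
  ultimately show ?thesis by simp
qed

lemma exp_series_summable: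
  fixes S :: real assumes "S \<ge> 0"
  shows "summable (\<lambda>k. 1 * (S ^ k / fact k) powr 1)"
proof -
  have "summable (\<lambda>n. inverse (fact n) * S^n)" by (rule summable_exp)
  moreover have "1 * (S ^ k / fact k) powr 1 = inverse (fact k) * S^k" for k
    using assms by (simp add: field_simps)
  ultimately show ?thesis by simp
qed

lemma part1:
  fixes C :: real
  assumes C: "C > 0" and pw: "is_product_weights \<gamma> g"
  shows "in_S_inf C \<gamma> \<longleftrightarrow> summable g"
proof -
  have g0: "\<And>j. 0 \<le> g j" and gam: "\<And>u. u \<in> U_inf \<Longrightarrow> \<gamma> u = (\<Prod>j\<in>u. g j)"
    using pw unfolding is_product_weights_def by auto
  define c where "c j = C^2 * g j" for j
  have c0: "\<And>j. c j \<ge> 0" using g0 by (simp add: c_def)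
  have eq: "in_S_inf C \<gamma> \<longleftrightarrow> (\<lambda>u. (\<lambda>k. 1::real) (card u) * (\<Prod>j\<in>u. c j)) summable_on U_inf"
    unfolding in_S_inf_def
    by (rule summable_on_cong) (simp add: gam c_def prod.distrib power_mult)
  show ?thesis
  proof
    assume "in_S_inf C \<gamma>"
    then have "summable (\<lambda>j. (\<lambda>k. 1::real) (card {j}) * (\<Prod>i\<in>{j}. c i))"
      unfolding eq by (rule sing_summable)
    then have "summable (\<lambda>j. C^2 * g j)" by (simp add: c_def)
    then show "summable g" using C by simp
  next
    assume sg: "summable g"
    have cc: "c j powr (1/1) = c j" for j using c0 by (simp add: powr_one)
    show "in_S_inf C \<gamma>" unfolding eq
    proof (rule main_summable[where b=1])
      show "summable (\<lambda>j. c j powr (1/1))" unfolding cc unfolding c_def using sg by simp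
      show "summable (\<lambda>k. 1 * ((\<Sum>j. c j powr (1 / 1)) ^ k / fact k) powr 1)"
      proof -
        have sc: "summable c" unfolding c_def using sg by simp
        show ?thesis unfolding cc by (rule exp_series_summable) (rule suminf_nonneg[OF sc c0])
      qed
    qed (use c0 in auto)
  qed
qed

lemma pod_eq:
  fixes C :: real
  assumes pw: "is_POD_weights \<gamma> \<Gamma> g a Ca"
  shows "in_S_inf C \<gamma> \<longleftrightarrow> (\<lambda>u. \<Gamma> (card u) * (\<Prod>j\<in>u. C^2 * g j)) summable_on U_inf"
proof -
  have gam: "\<And>u. u \<in> U_inf \<Longrightarrow> \<gamma> u = \<Gamma> (card u) * (\<Prod>j\<in>u. g j)"
    using pw unfolding is_POD_weights_def by auto
  show ?thesis unfolding in_S_inf_def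
    by (rule summable_on_cong) (simp add: gam prod.distrib power_mult)
qed

lemma pod_sw:
  fixes S a b Ca :: real and G :: "nat \<Rightarrow> real"
  assumes "S \<ge> 0" "\<And>k. G k \<le> Ca * fact k powr a" "\<And>k. 0 \<le> G k"
    and "summable (\<lambda>k. Ca * ((S powr b) ^ k * fact k powr (a - b)))"
  shows "summable (\<lambda>k. G k * (S ^ k / fact k) powr b)"
proof (rule summable_comparison_test'[OF assms(4)])
  fix n :: nat
  have "norm (G n * (S ^ n / fact n) powr b) = G n * (S ^ n / fact n) powr b"
    using assms by simp
  also have "\<dots> \<le> Ca * ((S powr b) ^ n * fact n powr (a - b))"
    using assms by (intro term_bound) auto
  finally show "norm (G n * (S ^ n / fact n) powr b) \<le> Ca * ((S powr b) ^ n * fact n powr (a - b))" .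
qed

lemma part2a:
  fixes C :: real
  assumes C: "C > 0" and pw: "is_POD_weights \<gamma> \<Gamma> g a Ca"
    and dec: "decay g > ereal a" and G1: "\<Gamma> 1 > 0"
  shows "in_S_inf C \<gamma> \<longleftrightarrow> summable g"
proof -
  have g0: "\<And>j. 0 \<le> g j" and a0: "a > 0" and Ca0: "Ca > 0"
    and G: "\<And>k. 0 \<le> \<Gamma> k \<and> \<Gamma> k \<le> Ca * (fact k) powr a"
    using pw unfolding is_POD_weights_def by auto
  define c where "c j = C^2 * g j" for j
  have c0: "\<And>j. c j \<ge> 0" using g0 by (simp add: c_def)
  have eq: "in_S_inf C \<gamma> \<longleftrightarrow> (\<lambda>u. \<Gamma> (card u) * (\<Prod>j\<in>u. c j)) summable_on U_inf"
    unfolding c_def by (rule pod_eq[OF pw])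
  show ?thesis
  proof
    assume "in_S_inf C \<gamma>"
    then have "summable (\<lambda>j. \<Gamma> (card {j}) * (\<Prod>i\<in>{j}. c i))"
      unfolding eq by (rule sing_summable)
    then have "summable (\<lambda>j. (\<Gamma> 1 * C^2) * g j)" by (simp add: c_def mult.assoc)
    then show "summable g" using C G1 by simp
  next
    assume sg: "summable g"
    obtain b where b1: "b \<ge> 1" and ab: "a < b" and sx: "summable (\<lambda>j. c j powr (1/b))"
    proof (cases "a < 1")
      case True
      have cc: "c j powr (1/1) = c j" for j using c0 by (simp add: powr_one)
      have "summable (\<lambda>j. c j powr (1/1))" unfolding cc unfolding c_def using sg by simp
      then show ?thesis using that[of 1] True by simp
    next
      case False
      define T where "T = {\<tau>::real. \<tau> > 0 \<and> summable (\<lambda>j. g j powr (1 / \<tau>))}"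
      have "T \<noteq> {}"
      proof
        assume "T = {}"
        then have "decay g = 0" unfolding decay_def T_def[symmetric] by simp
        then show False using dec a0 by simp
      qed
      then have "ereal a < Sup (ereal ` T)" using dec unfolding decay_def T_def[symmetric] by simp
      then obtain \<tau> where t: "\<tau> \<in> T" "a < \<tau>" by (auto simp: less_Sup_iff)
      have "summable (\<lambda>j. (C^2) powr (1/\<tau>) * g j powr (1/\<tau>))" using t by (simp add: T_def)
      moreover have "c j powr (1/\<tau>) = (C^2) powr (1/\<tau>) * g j powr (1/\<tau>)" for j
        unfolding c_def using g0 by (simp add: powr_mult)
      ultimately have "summable (\<lambda>j. c j powr (1/\<tau>))" by simp
      then show ?thesis using that[of \<tau>] t False by simp
    qed
    let ?S = "\<Sum>j. c j powr (1 / b)"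
    have S0: "?S \<ge> 0" using sx by (intro suminf_nonneg) auto
    show "in_S_inf C \<gamma>" unfolding eq
    proof (rule main_summable[OF c0 _ b1 sx])
      show "\<And>k. 0 \<le> \<Gamma> k" using G by auto
      show "summable (\<lambda>k. \<Gamma> k * (?S ^ k / fact k) powr b)"
      proof (rule pod_sw[OF S0])
        show "\<And>k. \<Gamma> k \<le> Ca * fact k powr a" "\<And>k. 0 \<le> \<Gamma> k" using G by auto
        have "summable (\<lambda>k. (?S powr b) ^ k * fact k powr (- (b - a)))"
          using ab by (intro geom_fact) auto
        then show "summable (\<lambda>k. Ca * ((?S powr b) ^ k * fact k powr (a - b)))" by simp
      qed
    qed
  qed
qed

lemma part2b:
  fixes C :: real
  assumes C: "C > 0" and pw: "is_POD_weights \<gamma> \<Gamma> g a Ca" and a1: "a \<ge> 1"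
    and sx: "summable (\<lambda>j. (C\<^sup>2 * g j) powr (1 / a))"
    and lt: "(\<Sum>j. (C\<^sup>2 * g j) powr (1 / a)) < 1"
  shows "in_S_inf C \<gamma>"
proof -
  have g0: "\<And>j. 0 \<le> g j" and a0: "a > 0" and Ca0: "Ca > 0"
    and G: "\<And>k. 0 \<le> \<Gamma> k \<and> \<Gamma> k \<le> Ca * (fact k) powr a"
    using pw unfolding is_POD_weights_def by auto
  define c where "c j = C^2 * g j" for j
  have c0: "\<And>j. c j \<ge> 0" using g0 by (simp add: c_def)
  have eq: "in_S_inf C \<gamma> \<longleftrightarrow> (\<lambda>u. \<Gamma> (card u) * (\<Prod>j\<in>u. c j)) summable_on U_inf"
    unfolding c_def by (rule pod_eq[OF pw])
  have sx': "summable (\<lambda>j. c j powr (1/a))" using sx by (simp add: c_def)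
  let ?S = "\<Sum>j. c j powr (1 / a)"
  have S0: "?S \<ge> 0" using sx' by (intro suminf_nonneg) auto
  have S1: "?S < 1" using lt by (simp add: c_def)
  have X1: "?S powr a < 1" using powr_less_mono2[OF a0 S0 S1] by simp
  have X0: "?S powr a \<ge> 0" by simp
  show ?thesis unfolding eq
  proof (rule main_summable[OF c0 _ a1 sx'])
    show "\<And>k. 0 \<le> \<Gamma> k" using G by auto
    show "summable (\<lambda>k. \<Gamma> k * (?S ^ k / fact k) powr a)"
    proof (rule pod_sw[OF S0])
      show "\<And>k. \<Gamma> k \<le> Ca * fact k powr a" "\<And>k. 0 \<le> \<Gamma> k" using G by auto
      have "summable (\<lambda>k. (?S powr a) ^ k)"
        using X0 X1 by (intro summable_geometric) simp
      then show "summable (\<lambda>k. Ca * ((?S powr a) ^ k * fact k powr (a - a)))" by simp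
    qed
  qed
qed

lemma part3:
  fixes C :: real
  assumes C: "C > 0" and fo: "is_finite_order_weights \<gamma> \<omega>"
  shows "in_S_inf C \<gamma> \<longleftrightarrow> \<gamma> summable_on U_inf"
proof -
  have g0: "\<And>u. u \<in> U_inf \<Longrightarrow> 0 \<le> \<gamma> u"
    and gz: "\<And>u. u \<in> U_inf \<Longrightarrow> card u > \<omega> \<Longrightarrow> \<gamma> u = 0"
    using fo unfolding is_finite_order_weights_def by auto
  define K1 where "K1 = (max 1 (C^2)) ^ \<omega>"
  define K2 where "K2 = (min 1 (C^2)) ^ \<omega>"
  have K2p: "K2 > 0" unfolding K2_def using C by simp
  have up: "C ^ (2 * card u) * \<gamma> u \<le> K1 * \<gamma> u" if "u \<in> U_inf" for u
  proof (cases "card u \<le> \<omega>")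
    case True
    have "C ^ (2 * card u) = (C^2) ^ card u" by (simp add: power_mult)
    also have "\<dots> \<le> (max 1 (C^2)) ^ card u" by (intro power_mono) auto
    also have "\<dots> \<le> K1" unfolding K1_def by (intro power_increasing True) auto
    finally show ?thesis using g0[OF that] by (intro mult_right_mono) auto
  next
    case False then show ?thesis using gz[OF that] by simp
  qed
  have lo: "\<gamma> u \<le> (1 / K2) * (C ^ (2 * card u) * \<gamma> u)" if "u \<in> U_inf" for u
  proof (cases "card u \<le> \<omega>")
    case True
    have "K2 \<le> (min 1 (C^2)) ^ card u" unfolding K2_def
      using C by (intro power_decreasing True) auto
    also have "\<dots> \<le> (C^2) ^ card u" using C by (intro power_mono) auto
    also have "\<dots> = C ^ (2 * card u)" by (simp add: power_mult)
    finally have "K2 * \<gamma> u \<le> C ^ (2 * card u) * \<gamma> u" using g0[OF that] by (intro mult_right_mono) auto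
    then show ?thesis using K2p by (simp add: field_simps)
  next
    case False then show ?thesis using gz[OF that] by simp
  qed
  show ?thesis unfolding in_S_inf_def
  proof
    assume "(\<lambda>v. C ^ (2 * card v) * \<gamma> v) summable_on U_inf"
    then have "(\<lambda>v. (1 / K2) * (C ^ (2 * card v) * \<gamma> v)) summable_on U_inf"
      by (rule summable_on_cmult_right)
    then show "\<gamma> summable_on U_inf"
      by (rule summable_on_comparison_test) (use lo g0 in auto)
  next
    assume "\<gamma> summable_on U_inf"
    then have "(\<lambda>v. K1 * \<gamma> v) summable_on U_inf" by (rule summable_on_cmult_right)
    then show "(\<lambda>v. C ^ (2 * card v) * \<gamma> v) summable_on U_inf"
      by (rule summable_on_comparison_test) (use up g0 C in auto)
  qed
qed

theorem mainTheorem7: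
  fixes C :: real
  assumes "C > 0"
  shows "(\<forall>\<gamma> g. is_product_weights \<gamma> g \<longrightarrow> (in_S_inf C \<gamma> \<longleftrightarrow> summable g))
    \<and> (\<forall>\<gamma> \<Gamma> g a Ca. is_POD_weights \<gamma> \<Gamma> g a Ca \<longrightarrow>
         ((decay g > ereal a \<and> \<Gamma> 1 > 0 \<longrightarrow> (in_S_inf C \<gamma> \<longleftrightarrow> summable g)) \<and>
          (decay g = ereal a \<and> a \<ge> 1 \<and> summable (\<lambda>j. (C\<^sup>2 * g j) powr (1 / a)) \<and>
             (\<Sum>j. (C\<^sup>2 * g j) powr (1 / a)) < 1 \<longrightarrow> in_S_inf C \<gamma>)))
    \<and> (\<forall>\<gamma> \<omega>. \<omega> \<ge> 1 \<and> is_finite_order_weights \<gamma> \<omega> \<longrightarrow>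
         (in_S_inf C \<gamma> \<longleftrightarrow> \<gamma> summable_on U_inf))"
proof (intro conjI allI impI)
  fix \<gamma> g assume "is_product_weights \<gamma> g"
  then show "in_S_inf C \<gamma> \<longleftrightarrow> summable g" by (rule part1[OF assms])
next
  fix \<gamma> \<Gamma> g a Ca
  assume pw: "is_POD_weights \<gamma> \<Gamma> g a Ca"
  {
    assume h: "decay g > ereal a \<and> \<Gamma> 1 > 0"
    show "in_S_inf C \<gamma> \<longleftrightarrow> summable g"
      using h by (intro part2a[OF assms pw]) auto
  }
  {
    assume h: "decay g = ereal a \<and> a \<ge> 1 \<and> summable (\<lambda>j. (C\<^sup>2 * g j) powr (1 / a)) \<and>
             (\<Sum>j. (C\<^sup>2 * g j) powr (1 / a)) < 1"
    show "in_S_inf C \<gamma>"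
      using h by (intro part2b[OF assms pw]) auto
  }
next
  fix \<gamma> and \<omega> :: nat
  assume "1 \<le> \<omega> \<and> is_finite_order_weights \<gamma> \<omega>"
  then show "in_S_inf C \<gamma> \<longleftrightarrow> \<gamma> summable_on U_inf"
    using part3[OF assms] by blast
qed

end
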